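(* Let $k\ge2$ and $\varepsilon>0$, and let $K$, the sets $C_x$ and the map $\Phi_\varepsilon$ be as defined in the context. Let $\mathbf{q}^\ast=\Phi_\varepsilon(\mathbf{U}_k)$, where $\mathbf{U}_k$ is the uniform distribution on $[k]$. Then $\|\mathbf{q}^\ast\|_2^2=O(1/K)$, with an absolute implied constant.
   Context: Generalised Hadamard Response with parameter $\varepsilon>0$ on $[k]$: $a=2^{\lfloor\log_2\min(e^{\varepsilon},2k)\rfloor}$, $b=2^{\lceil\log_2(k/a+1)\rceil}$, $K=ab$, $s=b/2$. Let $H_b$ be the $b\times b$ Sylvester Hadamard matrix and $P_b$ the $b\times b$ all-$(-1)$ matrix; $\bar H_{a,b}\in\{-1,1\}^{K\times K}$ is the $a\times a$ block matrix with $H_b$ on the diagonal blocks and $P_b$ in all off-diagonal blocks. The $a(b-1)\ge k$ rows of $\bar H_{a,b}$ that are not the first row of a diagonal copy of $H_b$ each have exactly $s$ entries $+1$; each $x\in[k]$ is mapped to a distinct such row, and $C_x\subseteq[K]$ is the set of columns where that row equals $+1$. For a distribution $\mathbf{p}$ on $[k]$, $\Phi_\varepsilon(\mathbf{p})$ is the distribution on $[K]$ given by $\Phi_\varepsilon(\mathbf{p})(y)=\frac{1}{se^\varepsilon+K-s}\big((e^\varepsilon-1)\sum_{x\in[k]}\mathbf{p}(x)\mathbf{1}\{y\in C_x\}+1\big)$. *)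

theory Defs
  imports Complex_Main
begin

definition ghr_a :: "nat \<Rightarrow> real \<Rightarrow> nat" where
  "ghr_a k \<epsilon> = 2 ^ nat \<lfloor>log 2 (min (exp \<epsilon>) (2 * real k))\<rfloor>"

definition ghr_b :: "nat \<Rightarrow> real \<Rightarrow> nat" where
  "ghr_b k \<epsilon> = 2 ^ nat \<lceil>log 2 (real k / real (ghr_a k \<epsilon>) + 1)\<rceil>"

definition ghr_K :: "nat \<Rightarrow> real \<Rightarrow> nat" where
  "ghr_K k \<epsilon> = ghr_a k \<epsilon> * ghr_b k \<epsilon>"

definition ghr_s :: "nat \<Rightarrow> real \<Rightarrow> nat" where
  "ghr_s k \<epsilon> = ghr_b k \<epsilon> div 2"

text \<open>Sylvester Hadamard matrix of size 2^n (0-indexed entries):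
  H_1 = [1], H_{2m} = [[H_m, H_m], [H_m, -H_m]].\<close>
fun sylvester :: "nat \<Rightarrow> nat \<Rightarrow> nat \<Rightarrow> int" where
  "sylvester 0 i j = 1"
| "sylvester (Suc n) i j =
     sylvester n (i mod 2 ^ n) (j mod 2 ^ n) * (if 2 ^ n \<le> i \<and> 2 ^ n \<le> j then -1 else 1)"

definition Hbar :: "nat \<Rightarrow> nat \<Rightarrow> nat \<Rightarrow> nat \<Rightarrow> int" where
  "Hbar a b i j = (if i div b = j div b
                   then sylvester (nat \<lceil>log 2 (real b)\<rceil>) (i mod b) (j mod b) else -1)"

text \<open>Admissible rows: not the first row of a diagonal copy of H_b.\<close>
definition ghr_rows :: "nat \<Rightarrow> real \<Rightarrow> nat set" where
  "ghr_rows k \<epsilon> = {i. i < ghr_K k \<epsilon> \<and> i mod ghr_b k \<epsilon> \<noteq> 0}"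

text \<open>C_x for an assignment row of elements of [k] to admissible rows.\<close>
definition ghr_C :: "nat \<Rightarrow> real \<Rightarrow> (nat \<Rightarrow> nat) \<Rightarrow> nat \<Rightarrow> nat set" where
  "ghr_C k \<epsilon> row x =
     {y. y < ghr_K k \<epsilon> \<and> Hbar (ghr_a k \<epsilon>) (ghr_b k \<epsilon>) (row x) y = 1}"

text \<open>Output distribution \<Phi>_\<epsilon>(p) on [K] = {0..<K}.\<close>
definition ghr_Phi :: "nat \<Rightarrow> real \<Rightarrow> (nat \<Rightarrow> nat) \<Rightarrow> (nat \<Rightarrow> real) \<Rightarrow> nat \<Rightarrow> real" where
  "ghr_Phi k \<epsilon> row p y =
     ((exp \<epsilon> - 1) * (\<Sum>x<k. p x * (if y \<in> ghr_C k \<epsilon> row x then 1 else 0)) + 1)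
     / (real (ghr_s k \<epsilon>) * exp \<epsilon> + real (ghr_K k \<epsilon>) - real (ghr_s k \<epsilon>))"

definition uniform_dist :: "nat \<Rightarrow> nat \<Rightarrow> real" where
  "uniform_dist k x = (if x < k then 1 / real k else 0)"

end

theory Submission
  imports Defs
begin

lemma pow_floor_log_le:
  fixes x :: real assumes "x \<ge> 1"
  shows "real (2 ^ nat \<lfloor>log 2 x\<rfloor> :: nat) \<le> x" and "(1::real) \<le> real (2 ^ nat \<lfloor>log 2 x\<rfloor> :: nat)"
proof -
  have t0: "log 2 x \<ge> 0" using assms by simp
  have "real (2 ^ nat \<lfloor>log 2 x\<rfloor> :: nat) = 2 powr real (nat \<lfloor>log 2 x\<rfloor>)"
    by (simp add: powr_realpow)
  also have "\<dots> \<le> 2 powr log 2 x"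
    using t0 by (intro powr_mono) auto
  also have "\<dots> = x" using assms by simp
  finally show "real (2 ^ nat \<lfloor>log 2 x\<rfloor> :: nat) \<le> x" .
  show "(1::real) \<le> real (2 ^ nat \<lfloor>log 2 x\<rfloor> :: nat)" by simp
qed

lemma pow_ceil_log:
  fixes x :: real assumes "x > 1"
  shows "real (2 ^ nat \<lceil>log 2 x\<rceil> :: nat) < 2 * x" and "(2::real) \<le> real (2 ^ nat \<lceil>log 2 x\<rceil> :: nat)"
    and "even (2 ^ nat \<lceil>log 2 x\<rceil> :: nat)"
proof -
  have t0: "log 2 x > 0" using assms by simp
  hence n1: "nat \<lceil>log 2 x\<rceil> \<ge> 1" by linarith
  have "real (2 ^ nat \<lceil>log 2 x\<rceil> :: nat) = 2 powr real (nat \<lceil>log 2 x\<rceil>)"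
    by (simp add: powr_realpow)
  also have "\<dots> < 2 powr (log 2 x + 1)"
    using t0 by (intro powr_less_mono) linarith+
  also have "\<dots> = 2 * x" using assms by (simp add: powr_add)
  finally show "real (2 ^ nat \<lceil>log 2 x\<rceil> :: nat) < 2 * x" .
  have "(2::nat) ^ 1 \<le> 2 ^ nat \<lceil>log 2 x\<rceil>" using n1 by (intro power_increasing) auto
  then have "real (2::nat) \<le> real (2 ^ nat \<lceil>log 2 x\<rceil> :: nat)" by (simp only: of_nat_le_iff power_one_right)
  then show "(2::real) \<le> real (2 ^ nat \<lceil>log 2 x\<rceil> :: nat)" by simp
  show "even (2 ^ nat \<lceil>log 2 x\<rceil> :: nat)" using n1 t0 by simp
qed

lemma card_block:
  assumes "b > 0"
  shows "card {i::nat. i div b = q} \<le> b" and "finite {i::nat. i div b = q}"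
proof -
  have sub: "{i::nat. i div b = q} \<subseteq> {q*b..<q*b+b}"
  proof
    fix i assume "i \<in> {i::nat. i div b = q}"
    then have "i = q*b + i mod b" by (metis div_mult_mod_eq mem_Collect_eq)
    moreover have "i mod b < b" using assms by simp
    ultimately show "i \<in> {q*b..<q*b+b}" by auto
  qed
  then show "card {i::nat. i div b = q} \<le> b" by (metis card_atLeastLessThan card_mono finite_atLeastLessThan add_diff_cancel_left')
  show "finite {i::nat. i div b = q}" using sub finite_subset by blast
qed

theorem lemma4p5:
  shows "\<exists>c::real. \<forall>(k::nat) (\<epsilon>::real) (row::nat \<Rightarrow> nat).
     k \<ge> 2 \<longrightarrow> \<epsilon> > 0 \<longrightarrow> inj_on row {..<k} \<longrightarrow> row ` {..<k} \<subseteq> ghr_rows k \<epsilon> \<longrightarrow>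
     (\<Sum>y<ghr_K k \<epsilon>. (ghr_Phi k \<epsilon> row (uniform_dist k) y)\<^sup>2) \<le> c / real (ghr_K k \<epsilon>)"
proof (intro exI[of _ 169] allI impI)
  fix k :: nat and \<epsilon> :: real and row :: "nat \<Rightarrow> nat"
  assume k2: "k \<ge> 2" and ep: "\<epsilon> > 0" and inj: "inj_on row {..<k}"
    and rows: "row ` {..<k} \<subseteq> ghr_rows k \<epsilon>"
  define a where "a = ghr_a k \<epsilon>"
  define b where "b = ghr_b k \<epsilon>"
  define K where "K = ghr_K k \<epsilon>"
  define s where "s = ghr_s k \<epsilon>"
  define e where "e = exp \<epsilon>"
  have e1: "e > 1" using ep by (simp add: e_def)
  have mn: "min (exp \<epsilon>) (2 * real k) \<ge> 1" using e1 k2 by (simp add: e_def)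
  have a_le: "real a \<le> 2 * real k" and a_ge: "real a \<ge> 1"
    using pow_floor_log_le[OF mn] unfolding a_def ghr_a_def by auto
  have a_le_e: "real a \<le> e"
    using pow_floor_log_le[OF mn] unfolding a_def ghr_a_def e_def by auto
  have xb: "real k / real a + 1 > 1" using a_ge k2 by simp
  have b_lt: "real b < 2 * (real k / real a + 1)" and b_ge: "real b \<ge> 2" and b_ev: "even b"
    using pow_ceil_log[OF xb] unfolding b_def ghr_b_def a_def by auto
  have K_eq: "real K = real a * real b" by (simp add: K_def ghr_K_def a_def b_def)
  have K_lt: "real K < 6 * real k"
  proof -
    have "real a * real b < real a * (2 * (real k / real a + 1))"
      using b_lt a_ge by (intro mult_strict_left_mono) auto
    also have "\<dots> = 2 * real k + 2 * real a" using a_ge by (simp add: field_simps)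
    finally show ?thesis using K_eq a_le by linarith
  qed
  have K_pos: "real K > 0" using K_eq a_ge b_ge by simp
  have s_eq: "real s = real b / 2" using b_ev by (auto simp: s_def ghr_s_def b_def elim!: evenE)
  define D where "D = real s * e + real K - real s"
  have D_eq: "D = real K + (e - 1) * real b / 2" by (simp add: D_def s_eq field_simps)
  have D_ge_K: "D \<ge> real K" using D_eq e1 b_ge by simp
  have D_ge_b: "D \<ge> (e - 1) * real b / 2" using D_eq K_pos by simp
  have bpos: "b > 0" using b_ge by simp
  have bound: "0 \<le> ghr_Phi k \<epsilon> row (uniform_dist k) y \<and> ghr_Phi k \<epsilon> row (uniform_dist k) y \<le> 13 / real K"
    if y: "y < K" for y
  proof -
    define M where "M = {x\<in>{..<k}. y \<in> ghr_C k \<epsilon> row x}"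
    have sum_eq: "(\<Sum>x<k. uniform_dist k x * (if y \<in> ghr_C k \<epsilon> row x then 1 else 0)) = real (card M) / real k"
    proof -
      have "(\<Sum>x<k. uniform_dist k x * (if y \<in> ghr_C k \<epsilon> row x then 1 else 0))
          = (\<Sum>x<k. (if y \<in> ghr_C k \<epsilon> row x then 1 / real k else 0))"
        by (intro sum.cong) (auto simp: uniform_dist_def)
      also have "\<dots> = (\<Sum>x\<in>M. 1 / real k)" unfolding M_def by (simp add: sum.inter_filter[symmetric])
      finally show ?thesis by simp
    qed
    have "row ` M \<subseteq> {i. i div b = y div b}"
    proof
      fix i assume "i \<in> row ` M"
      then obtain x where "x \<in> M" "i = row x" by auto
      then have "Hbar a b i y = 1" unfolding M_def ghr_C_def a_def b_def by auto
      then show "i \<in> {i. i div b = y div b}" unfolding Hbar_def by (auto split: if_splits)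
    qed
    moreover have "card (row ` M) = card M"
      using inj by (intro card_image) (auto intro: inj_on_subset simp: M_def)
    ultimately have cM: "card M \<le> b"
      using card_block[OF bpos, of "y div b"] card_mono[of "{i. i div b = y div b}" "row ` M"] by linarith
    have Phi: "ghr_Phi k \<epsilon> row (uniform_dist k) y = ((e - 1) * (real (card M) / real k) + 1) / D"
      unfolding ghr_Phi_def sum_eq D_def s_def K_def e_def ..
    have kpos: "real k > 0" using k2 by simp
    have Dpos: "D > 0" using D_ge_K K_pos by linarith
    have t1: "(e - 1) * (real (card M) / real k) / D \<le> 12 / real K"
    proof -
      have "(e - 1) * (real (card M) / real k) / D \<le> (e - 1) * (real b / real k) / ((e - 1) * real b / 2)"
        using cM e1 kpos Dpos D_ge_b b_ge
        by (intro frac_le mult_left_mono divide_right_mono) auto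
      also have "\<dots> = 2 / real k" using e1 b_ge kpos by (simp add: field_simps)
      also have "\<dots> \<le> 12 / real K" using K_lt K_pos kpos by (simp add: field_simps)
      finally show ?thesis .
    qed
    have t2: "1 / D \<le> 1 / real K" using D_ge_K K_pos by (simp add: frac_le)
    have "((e - 1) * (real (card M) / real k) + 1) / D = (e - 1) * (real (card M) / real k) / D + 1 / D"
      by (simp add: add_divide_distrib)
    then have up: "((e - 1) * (real (card M) / real k) + 1) / D \<le> 13 / real K" using t1 t2 by simp
    have lo: "0 \<le> ((e - 1) * (real (card M) / real k) + 1) / D" using e1 Dpos kpos by simp
    show ?thesis using up lo Phi by simp
  qed
  have "(\<Sum>y<K. (ghr_Phi k \<epsilon> row (uniform_dist k) y)\<^sup>2) \<le> (\<Sum>y<K. (13 / real K)\<^sup>2)"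
    using bound by (intro sum_mono power_mono) auto
  also have "\<dots> = 169 / real K" using K_pos by (simp add: power2_eq_square field_simps)
  finally show "(\<Sum>y<ghr_K k \<epsilon>. (ghr_Phi k \<epsilon> row (uniform_dist k) y)\<^sup>2) \<le> 169 / real (ghr_K k \<epsilon>)"
    by (simp add: K_def)
qed

end
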